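(* Let $n,a,b$ be positive integers and $c$ a nonnegative integer. The polytopes $\mathcal F_{k^{a,b,c}_{n+2}(S)}$, $S\subseteq[n]$, are interior disjoint and satisfy $$\mathcal F_{k^{a,b+1,c}_{n+2}}\equiv\bigcup_{S\subseteq[n]}\mathcal F_{k^{a,b,c}_{n+2}(S)};$$ that is, $\mathcal F_{k^{a,b+1,c}_{n+2}}$ is integrally equivalent to a union of $2^n$ polytopes $P_S$ ($S\subseteq[n]$) with pairwise disjoint interiors, where each $P_S$ is integrally equivalent to $\mathcal F_{k^{a,b,c}_{n+2}(S)}$.
   Context: For a directed multigraph $G$ on $\{0,\dots,n+1\}$ with edges $(i,j)$ oriented $i\to j$, $i<j$, $\mathcal F_G$ is the flow polytope: the set of $f\in\mathbb R_{\ge0}^{E(G)}$ such that the net flow (outgoing minus incoming) is $1$ at vertex $0$, $-1$ at vertex $n+1$ and $0$ at every other vertex. Two polytopes $P\subset\mathbb R^p$, $Q\subset\mathbb R^q$ are integrally equivalent ($P\equiv Q$) if there is an affine map $\mathbb R^p\to\mathbb R^q$ restricting to a bijection $P\to Q$ and to a bijection $\mathrm{aff}(P)\cap\mathbb Z^p\to\mathrm{aff}(Q)\cap\mathbb Z^q$. $k_{n+2}^{a,b,c}$ is the multigraph on $\{0,\dots,n+1\}$ with edge $(0,i)$ of multiplicity $a$ and $(i,n+1)$ of multiplicity $b$ for each $i\in[n]$, and edge $(i,j)$ of multiplicity $c$ for $1\le i<j\le n$. For $S\subseteq[n]$, $k^{a,b,c}_{n+2}(S)$ is obtained from $k^{a,b,c}_{n+2}$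 by adding $n$ edges $(0,n+1)$ and, for each $i\in S$, deleting one of the $a$ copies of $(0,i)$ and adding one edge $(i,n+1)$. *)

theory Defs
  imports "HOL-Analysis.Analysis"
begin

text \<open>Points of R^p are represented as functions nat => real vanishing
outside the index set {..<p}.\<close>

definition Rsp :: "nat \<Rightarrow> (nat \<Rightarrow> real) set" where
  "Rsp p = {x. \<forall>i. p \<le> i \<longrightarrow> x i = 0}"

definition Zpts :: "(nat \<Rightarrow> real) set" where
  "Zpts = {x. \<forall>i. x i \<in> \<int>}"

definition aff :: "(nat \<Rightarrow> real) set \<Rightarrow> (nat \<Rightarrow> real) set" where
  "aff P = {y. \<exists>X u. finite X \<and> X \<noteq> {} \<and> X \<subseteq> P \<and> sum u X = 1 \<and>
                  y = (\<lambda>i. \<Sum>x\<in>X. u x * x i)}"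

definition affine_map :: "nat \<Rightarrow> nat \<Rightarrow> ((nat \<Rightarrow> real) \<Rightarrow> (nat \<Rightarrow> real)) \<Rightarrow> bool" where
  "affine_map p q T \<longleftrightarrow> (\<exists>(A::nat \<Rightarrow> nat \<Rightarrow> real) (c::nat \<Rightarrow> real).
      \<forall>x. T x = (\<lambda>j. if j < q then (\<Sum>i<p. A j i * x i) + c j else 0))"

definition int_equiv :: "nat \<Rightarrow> (nat \<Rightarrow> real) set \<Rightarrow> nat \<Rightarrow> (nat \<Rightarrow> real) set \<Rightarrow> bool" where
  "int_equiv p P q Q \<longleftrightarrow> P \<subseteq> Rsp p \<and> Q \<subseteq> Rsp q \<and>
     (\<exists>T. affine_map p q T \<and> bij_betw T P Q \<and>
          bij_betw T (aff P \<inter> Rsp p \<inter> Zpts) (aff Q \<inter> Rsp q \<inter> Zpts))"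

definition distq :: "nat \<Rightarrow> (nat \<Rightarrow> real) \<Rightarrow> (nat \<Rightarrow> real) \<Rightarrow> real" where
  "distq q x y = sqrt (\<Sum>i<q. (x i - y i)^2)"

definition interior_in :: "nat \<Rightarrow> (nat \<Rightarrow> real) set \<Rightarrow> (nat \<Rightarrow> real) set \<Rightarrow> (nat \<Rightarrow> real) set" where
  "interior_in q U P = {x \<in> P. \<exists>e>0. \<forall>y \<in> aff U. distq q x y < e \<longrightarrow> y \<in> P}"

text \<open>Multigraphs on {0..n+1}: lists of edges (i,j), i<j; edge e is G!e,
  the edge set is indexed by {..<length G}.\<close>
type_synonym mgraph = "(nat \<times> nat) list"

definition netflow :: "mgraph \<Rightarrow> (nat \<Rightarrow> real) \<Rightarrow> nat \<Rightarrow> real" where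
  "netflow G f v = (\<Sum>e<length G. if fst (G!e) = v then f e else 0)
                 - (\<Sum>e<length G. if snd (G!e) = v then f e else 0)"

definition flow_polytope :: "nat \<Rightarrow> mgraph \<Rightarrow> (nat \<Rightarrow> real) set" where
  "flow_polytope t G = {f. f \<in> Rsp (length G) \<and> (\<forall>e<length G. 0 \<le> f e) \<and>
      (\<forall>v\<le>t. netflow G f v = (if v = 0 then 1 else if v = t then -1 else 0))}"

definition kgraph :: "nat \<Rightarrow> nat \<Rightarrow> nat \<Rightarrow> nat \<Rightarrow> mgraph" where
  "kgraph a b c n =
     concat (map (\<lambda>i. replicate a (0, i)) [1..<n+1]) @
     concat (map (\<lambda>i. replicate b (i, n+1)) [1..<n+1]) @
     concat (map (\<lambda>i. concat (map (\<lambda>j. replicate c (i, j)) [i+1..<n+1])) [1..<n+1])"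

definition kgraphS :: "nat \<Rightarrow> nat \<Rightarrow> nat \<Rightarrow> nat \<Rightarrow> nat set \<Rightarrow> mgraph" where
  "kgraphS a b c n S =
     concat (map (\<lambda>i. replicate (if i \<in> S then a - 1 else a) (0, i)) [1..<n+1]) @
     concat (map (\<lambda>i. replicate (if i \<in> S then b + 1 else b) (i, n+1)) [1..<n+1]) @
     concat (map (\<lambda>i. concat (map (\<lambda>j. replicate c (i, j)) [i+1..<n+1])) [1..<n+1]) @
     replicate n (0, n+1)"

end

theory Submission
  imports Defs "HOL-Combinatorics.List_Permutation"
begin


lemma aff_Rsp: "P \<subseteq> Rsp p \<Longrightarrow> aff P \<subseteq> Rsp p"
  unfolding aff_def Rsp_def by (auto intro!: sum.neutral)

lemma affine_map_Rsp: "affine_map p q T \<Longrightarrow> T x \<in> Rsp q"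
  unfolding affine_map_def Rsp_def by auto

lemma affine_map_comb:
  assumes "affine_map p q T" "finite X" "sum u X = 1" "X \<subseteq> Rsp p"
  shows "T (\<lambda>i. \<Sum>x\<in>X. u x * x i) = (\<lambda>j. \<Sum>x\<in>X. u x * T x j)"
proof -
  obtain A c where T: "\<And>x. T x = (\<lambda>j. if j < q then (\<Sum>i<p. A j i * x i) + c j else 0)"
    using assms(1) unfolding affine_map_def by blast
  show ?thesis
  proof
    fix j
    show "T (\<lambda>i. \<Sum>x\<in>X. u x * x i) j = (\<Sum>x\<in>X. u x * T x j)"
    proof (cases "j < q")
      case True
      have "(\<Sum>i<p. A j i * (\<Sum>x\<in>X. u x * x i)) + c j
          = (\<Sum>x\<in>X. u x * (\<Sum>i<p. A j i * x i)) + (\<Sum>x\<in>X. u x) * c j"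
        using assms by (simp add: sum_distrib_left sum_distrib_right algebra_simps sum.swap[of _ "{..<p}"])
      also have "\<dots> = (\<Sum>x\<in>X. u x * (\<Sum>i<p. A j i * x i)) + (\<Sum>x\<in>X. u x * c j)"
        by (simp add: sum_distrib_right)
      also have "\<dots> = (\<Sum>x\<in>X. u x * (\<Sum>i<p. A j i * x i) + u x * c j)"
        by (simp add: sum.distrib)
      also have "\<dots> = (\<Sum>x\<in>X. u x * ((\<Sum>i<p. A j i * x i) + c j))"
        by (simp add: distrib_left)
      finally show ?thesis using True by (simp add: T)
    qed (simp add: T)
  qed
qed

lemma aff_image:
  assumes T: "affine_map p q T" and inj: "inj_on T (Rsp p)" and P: "P \<subseteq> Rsp p"
  shows "aff (T ` P) = T ` aff P"
proof
  show "T ` aff P \<subseteq> aff (T ` P)"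
  proof
    fix z assume "z \<in> T ` aff P"
    then obtain X u where X: "finite X" "X \<noteq> {}" "X \<subseteq> P" "sum u X = 1"
      and z: "z = T (\<lambda>i. \<Sum>x\<in>X. u x * x i)" unfolding aff_def by blast
    have injX: "inj_on T X" using inj X P inj_on_subset[of T "Rsp p" X] by blast
    have z2: "z = (\<lambda>j. \<Sum>x\<in>X. u x * T x j)"
      using affine_map_comb[OF T X(1) X(4)] X P z by auto
    define w where "w = (\<lambda>y. u (the_inv_into X T y))"
    have wu: "\<And>x. x \<in> X \<Longrightarrow> w (T x) = u x"
      unfolding w_def using injX by (simp add: the_inv_into_f_f)
    have "sum w (T ` X) = 1"
      using X(4) by (simp add: sum.reindex[OF injX] wu)
    moreover have "z = (\<lambda>j. \<Sum>y\<in>T ` X. w y * y j)"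
      using z2 by (simp add: sum.reindex[OF injX] wu)
    ultimately show "z \<in> aff (T ` P)" unfolding aff_def using X
      by (intro CollectI exI[of _ "T ` X"] exI[of _ w]) auto
  qed
next
  show "aff (T ` P) \<subseteq> T ` aff P"
  proof
    fix z assume "z \<in> aff (T ` P)"
    then obtain Y w where Y: "finite Y" "Y \<noteq> {}" "Y \<subseteq> T ` P" "sum w Y = 1"
      and z: "z = (\<lambda>i. \<Sum>y\<in>Y. w y * y i)" unfolding aff_def by blast
    define X where "X = {x\<in>P. T x \<in> Y}"
    have "X \<subseteq> Rsp p" using P unfolding X_def by auto
    then have injX: "inj_on T X" using inj inj_on_subset by blast
    have TX: "T ` X = Y" using Y(3) unfolding X_def by auto
    have fX: "finite X" using TX Y(1) injX finite_imageD by blast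
    have XP: "X \<subseteq> P" "X \<noteq> {}" using TX Y(2) unfolding X_def by auto
    have s1: "sum (w \<circ> T) X = 1" using Y(4) TX sum.reindex[OF injX, of w] by simp
    have "T (\<lambda>i. \<Sum>x\<in>X. (w \<circ> T) x * x i) = (\<lambda>j. \<Sum>x\<in>X. (w \<circ> T) x * T x j)"
      using affine_map_comb[OF T fX s1] XP P by auto
    also have "\<dots> = z" unfolding z TX[symmetric] by (simp add: sum.reindex[OF injX])
    finally have "z = T (\<lambda>i. \<Sum>x\<in>X. (w \<circ> T) x * x i)" ..
    moreover have "(\<lambda>i. \<Sum>x\<in>X. (w \<circ> T) x * x i) \<in> aff P"
      unfolding aff_def using fX XP s1 by blast
    ultimately show "z \<in> T ` aff P" by blast
  qed
qed

lemma int_equiv_via: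
  assumes T: "affine_map p p T" and U: "affine_map p p U"
    and UT: "\<And>x. x \<in> Rsp p \<Longrightarrow> U (T x) = x"
    and TU: "\<And>x. x \<in> Rsp p \<Longrightarrow> T (U x) = x"
    and TZ: "\<And>x. x \<in> Rsp p \<Longrightarrow> x \<in> Zpts \<Longrightarrow> T x \<in> Zpts"
    and UZ: "\<And>x. x \<in> Rsp p \<Longrightarrow> x \<in> Zpts \<Longrightarrow> U x \<in> Zpts"
    and P: "P \<subseteq> Rsp p" and Q: "Q = T ` P"
  shows "int_equiv p P p Q"
proof -
  have inj: "inj_on T (Rsp p)" by (metis UT inj_on_inverseI)
  have affQ: "aff Q = T ` aff P" using aff_image[OF T inj P] Q by simp
  have aP: "aff P \<subseteq> Rsp p" using aff_Rsp[OF P] .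
  have "bij_betw T P Q" using Q inj P by (simp add: bij_betw_def inj_on_subset)
  moreover have "bij_betw T (aff P \<inter> Rsp p \<inter> Zpts) (aff Q \<inter> Rsp p \<inter> Zpts)"
    unfolding bij_betw_def
  proof
    show "inj_on T (aff P \<inter> Rsp p \<inter> Zpts)" by (rule inj_on_subset[OF inj]) auto
    show "T ` (aff P \<inter> Rsp p \<inter> Zpts) = aff Q \<inter> Rsp p \<inter> Zpts"
    proof
      show "T ` (aff P \<inter> Rsp p \<inter> Zpts) \<subseteq> aff Q \<inter> Rsp p \<inter> Zpts"
      proof
        fix y assume "y \<in> T ` (aff P \<inter> Rsp p \<inter> Zpts)"
        then obtain x where x: "x \<in> aff P" "x \<in> Rsp p" "x \<in> Zpts" "y = T x" by blast
        have "y \<in> aff Q" using x affQ by blast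
        moreover have "y \<in> Rsp p" using x affine_map_Rsp[OF T] by blast
        moreover have "y \<in> Zpts" using x TZ by blast
        ultimately show "y \<in> aff Q \<inter> Rsp p \<inter> Zpts" by blast
      qed
      show "aff Q \<inter> Rsp p \<inter> Zpts \<subseteq> T ` (aff P \<inter> Rsp p \<inter> Zpts)"
      proof
        fix y assume y: "y \<in> aff Q \<inter> Rsp p \<inter> Zpts"
        then obtain x where x: "x \<in> aff P" "y = T x" using affQ by auto
        have "x = U y" using UT x aP by auto
        then have "x \<in> Zpts" using UZ y by auto
        then show "y \<in> T ` (aff P \<inter> Rsp p \<inter> Zpts)" using x aP by auto
      qed
    qed
  qed
  moreover have "Q \<subseteq> Rsp p" using Q affine_map_Rsp[OF T] by auto
  ultimately show ?thesis unfolding int_equiv_def using P T by (intro conjI exI[of _ T]) simp_all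
qed

lemma affine_map_comp:
  assumes "affine_map p q T" "affine_map q r U" shows "affine_map p r (U \<circ> T)"
proof -
  obtain A c where T: "\<And>x. T x = (\<lambda>j. if j < q then (\<Sum>i<p. A j i * x i) + c j else 0)"
    using assms(1) unfolding affine_map_def by blast
  obtain B d where U: "\<And>x. U x = (\<lambda>j. if j < r then (\<Sum>i<q. B j i * x i) + d j else 0)"
    using assms(2) unfolding affine_map_def by blast
  show ?thesis unfolding affine_map_def
  proof (intro exI allI)
    fix x :: "nat \<Rightarrow> real"
    show "(U \<circ> T) x = (\<lambda>k. if k < r then (\<Sum>i<p. (\<Sum>j<q. B k j * A j i) * x i) + ((\<Sum>j<q. B k j * c j) + d k) else 0)"
    proof
      fix k
      have "(\<Sum>j<q. B k j * ((\<Sum>i<p. A j i * x i) + c j))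
          = (\<Sum>j<q. (\<Sum>i<p. B k j * A j i * x i)) + (\<Sum>j<q. B k j * c j)"
        by (simp add: distrib_left sum.distrib sum_distrib_left mult.assoc)
      also have "(\<Sum>j<q. (\<Sum>i<p. B k j * A j i * x i)) = (\<Sum>i<p. (\<Sum>j<q. B k j * A j i * x i))"
        by (rule sum.swap)
      also have "\<dots> = (\<Sum>i<p. (\<Sum>j<q. B k j * A j i) * x i)"
        by (simp add: sum_distrib_right)
      finally have e: "(\<Sum>j<q. B k j * ((\<Sum>i<p. A j i * x i) + c j)) = (\<Sum>i<p. (\<Sum>j<q. B k j * A j i) * x i) + (\<Sum>j<q. B k j * c j)" .
      have "(\<Sum>j<q. B k j * T x j) = (\<Sum>j<q. B k j * ((\<Sum>i<p. A j i * x i) + c j))"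
        by (rule sum.cong) (auto simp: T)
      then show "(U \<circ> T) x k = (if k < r then (\<Sum>i<p. (\<Sum>j<q. B k j * A j i) * x i) + ((\<Sum>j<q. B k j * c j) + d k) else 0)"
        using e by (simp add: U)
    qed
  qed
qed

lemma int_equiv_trans:
  assumes "int_equiv p P q Q" "int_equiv q Q r R" shows "int_equiv p P r R"
proof -
  obtain T where T: "affine_map p q T" "bij_betw T P Q" "bij_betw T (aff P \<inter> Rsp p \<inter> Zpts) (aff Q \<inter> Rsp q \<inter> Zpts)"
    using assms(1) unfolding int_equiv_def by blast
  obtain U where U: "affine_map q r U" "bij_betw U Q R" "bij_betw U (aff Q \<inter> Rsp q \<inter> Zpts) (aff R \<inter> Rsp r \<inter> Zpts)"
    using assms(2) unfolding int_equiv_def by blast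
  have "P \<subseteq> Rsp p" "R \<subseteq> Rsp r" using assms unfolding int_equiv_def by auto
  then show ?thesis unfolding int_equiv_def
    using affine_map_comp[OF T(1) U(1)] bij_betw_trans[OF T(2) U(2)] bij_betw_trans[OF T(3) U(3)]
    by blast
qed

lemma affine_map_lin:
  assumes "\<And>k. k < p \<Longrightarrow> m k < p"
  shows "affine_map p p (\<lambda>x k. if k < p then x k + s k * x (m k) else 0)"
  unfolding affine_map_def
proof (intro exI allI ext)
  fix x :: "nat \<Rightarrow> real" and k :: nat
  show "(if k < p then x k + s k * x (m k) else 0) =
    (if k < p then (\<Sum>i<p. ((if i = k then 1 else 0) + (if i = m k then s k else 0)) * x i) + 0 else 0)"
  proof (cases "k < p")
    case True
    have "(\<Sum>i<p. ((if i = k then 1 else 0) + (if i = m k then s k else 0)) * x i)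
       = (\<Sum>i<p. (if i = k then x i else 0)) + (\<Sum>i<p. (if i = m k then s k * x i else 0))"
      unfolding sum.distrib[symmetric] by (rule sum.cong) (auto simp: algebra_simps)
    also have "\<dots> = x k + s k * x (m k)" using True assms[OF True] by simp
    finally show ?thesis using True by simp
  qed simp
qed

lemma affine_map_perm:
  assumes "\<And>k. k < p \<Longrightarrow> m k < p"
  shows "affine_map p p (\<lambda>x k. if k < p then x (m k) else 0)"
  unfolding affine_map_def
proof (intro exI allI ext)
  fix x :: "nat \<Rightarrow> real" and k :: nat
  show "(if k < p then x (m k) else 0) =
    (if k < p then (\<Sum>i<p. (if i = m k then 1 else 0) * x i) + 0 else 0)"
  proof (cases "k < p")
    case True
    have "(\<Sum>i<p. (if i = m k then 1 else 0) * x i) = (\<Sum>i<p. if i = m k then x i else 0)"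
      by (rule sum.cong) auto
    then show ?thesis using True assms[OF True] by simp
  qed simp
qed



lemma length_concat_uniform:
  "(\<forall>x\<in>set xs. length (h x) = m) \<Longrightarrow> length (concat (map h xs)) = m * length xs"
  by (induction xs) auto

lemma nth_concat_uniform:
  "(\<forall>x\<in>set xs. length (h x) = m) \<Longrightarrow> k < m * length xs \<Longrightarrow>
   concat (map h xs) ! k = h (xs ! (k div m)) ! (k mod m)"
proof (induction xs arbitrary: k)
  case Nil then show ?case by simp
next
  case (Cons x xs)
  have m: "m > 0" using Cons.prems by (cases m) auto
  show ?case
  proof (cases "k < m")
    case True
    then show ?thesis using Cons.prems by (simp add: nth_append)
  next
    case False
    then have "k - m < m * length xs" using Cons.prems by (auto simp: algebra_simps)
    then have IH: "concat (map h xs) ! (k - m) = h (xs ! ((k - m) div m)) ! ((k - m) mod m)"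
      using Cons by auto
    have d: "k div m = Suc ((k - m) div m)" using False m
      by (simp add: le_div_geq)
    have md: "k mod m = (k - m) mod m" using False by (simp add: le_mod_geq)
    show ?thesis using False Cons.prems IH d md by (simp add: nth_append)
  qed
qed

definition chi :: "nat \<times> nat \<Rightarrow> nat \<Rightarrow> real" where
  "chi e v = (if fst e = v then 1 else 0) - (if snd e = v then 1 else 0)"

lemma netflow_chi: "netflow G f v = (\<Sum>e<length G. f e * chi (G!e) v)"
  unfolding netflow_def chi_def sum_subtractf[symmetric] by (rule sum.cong) auto

lemma netflow_two:
  assumes "p1 \<noteq> p2" "p1 < length G" "p2 < length G"
  shows "netflow G (\<lambda>k. if k = p1 \<or> k = p2 then 1 else 0) v = chi (G!p1) v + chi (G!p2) v"
proof -
  have "netflow G (\<lambda>k. if k = p1 \<or> k = p2 then 1 else 0) v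
     = (\<Sum>e<length G. (if e = p1 then chi (G!e) v else 0) + (if e = p2 then chi (G!e) v else 0))"
    unfolding netflow_chi using assms(1) by (intro sum.cong) auto
  also have "\<dots> = chi (G!p1) v + chi (G!p2) v" using assms by (simp add: sum.distrib)
  finally show ?thesis .
qed

lemma flow_perm:
  assumes f: "bij_betw f {..<length G'} {..<length G}" and GG: "\<forall>i<length G'. G'!i = G!(f i)"
  shows "int_equiv (length G) (flow_polytope t G) (length G') (flow_polytope t G')"
proof -
  define p where "p = length G"
  have len: "length G' = p" using bij_betw_same_card[OF f] p_def by simp
  define g where "g = the_inv_into {..<p} f"
  have inj: "inj_on f {..<p}" and im: "f ` {..<p} = {..<p}"
    using f len p_def unfolding bij_betw_def by auto
  have f1: "\<And>k. k < p \<Longrightarrow> f k < p" using im by auto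
  have g1: "\<And>k. k < p \<Longrightarrow> g k < p" unfolding g_def
    using the_inv_into_into[OF inj] im by (metis lessThan_iff subset_refl)
  have fg: "\<And>k. k < p \<Longrightarrow> f (g k) = k" unfolding g_def
    using f_the_inv_into_f[OF inj] im by simp
  have gf: "\<And>k. k < p \<Longrightarrow> g (f k) = k" unfolding g_def
    using the_inv_into_f_f[OF inj] by simp
  define T where "T = (\<lambda>(x::nat\<Rightarrow>real) k. if k < p then x (f k) else 0)"
  define U where "U = (\<lambda>(x::nat\<Rightarrow>real) k. if k < p then x (g k) else 0)"
  have aT: "affine_map p p T" unfolding T_def by (rule affine_map_perm[OF f1])
  have aU: "affine_map p p U" unfolding U_def by (rule affine_map_perm[OF g1])
  have UT: "U (T x) = x" if "x \<in> Rsp p" for x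
  proof
    fix k show "U (T x) k = x k"
      using that unfolding U_def T_def Rsp_def by (cases "k < p") (simp_all add: g1 fg)
  qed
  have TU: "T (U x) = x" if "x \<in> Rsp p" for x
  proof
    fix k show "T (U x) k = x k"
      using that unfolding U_def T_def Rsp_def by (cases "k < p") (simp_all add: f1 gf)
  qed
  have nf: "netflow G' (T x) v = netflow G x v" for x v
  proof -
    have "netflow G' (T x) v = (\<Sum>k<p. x (f k) * chi (G!(f k)) v)"
      unfolding netflow_chi len using GG len by (intro sum.cong) (auto simp: T_def)
    also have "\<dots> = (\<Sum>j<p. x j * chi (G!j) v)"
      using sum.reindex_bij_betw[OF f, of "\<lambda>j. x j * chi (G!j) v"] len p_def by simp
    finally show ?thesis unfolding netflow_chi p_def .
  qed
  have img: "flow_polytope t G' = T ` flow_polytope t G"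
  proof
    show "T ` flow_polytope t G \<subseteq> flow_polytope t G'"
    proof
      fix y assume "y \<in> T ` flow_polytope t G"
      then obtain x where x: "x \<in> flow_polytope t G" "y = T x" by blast
      have xF: "\<forall>e<p. 0 \<le> x e" "\<forall>v\<le>t. netflow G x v = (if v = 0 then 1 else if v = t then -1 else 0)"
        using x(1) unfolding flow_polytope_def p_def by auto
      have "\<forall>e<p. 0 \<le> T x e" using xF(1) f1 by (simp add: T_def)
      moreover have "\<forall>v\<le>t. netflow G' (T x) v = (if v = 0 then 1 else if v = t then -1 else 0)"
        using xF(2) nf by simp
      ultimately show "y \<in> flow_polytope t G'"
        using affine_map_Rsp[OF aT, of x] x(2) unfolding flow_polytope_def len by simp
    qed
    show "flow_polytope t G' \<subseteq> T ` flow_polytope t G"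
    proof
      fix y assume y: "y \<in> flow_polytope t G'"
      then have yR: "y \<in> Rsp p" unfolding flow_polytope_def len by auto
      have yF: "\<forall>e<p. 0 \<le> y e" "\<forall>v\<le>t. netflow G' y v = (if v = 0 then 1 else if v = t then -1 else 0)"
        using y unfolding flow_polytope_def len by auto
      have "\<forall>e<p. 0 \<le> U y e" using yF(1) g1 by (simp add: U_def)
      moreover have "\<forall>v\<le>t. netflow G (U y) v = (if v = 0 then 1 else if v = t then -1 else 0)"
        using yF(2) nf[of "U y", symmetric] TU[OF yR] by simp
      ultimately have "U y \<in> flow_polytope t G"
        using affine_map_Rsp[OF aU, of y] unfolding flow_polytope_def p_def by simp
      moreover have "y = T (U y)" using TU[OF yR] by simp
      ultimately show "y \<in> T ` flow_polytope t G" by blast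
    qed
  qed
  have "int_equiv p (flow_polytope t G) p (flow_polytope t G')"
  proof (rule int_equiv_via[OF aT aU UT TU])
    show "T x \<in> Zpts" if "x \<in> Zpts" for x using that unfolding T_def Zpts_def by auto
    show "U x \<in> Zpts" if "x \<in> Zpts" for x using that unfolding U_def Zpts_def by auto
    show "flow_polytope t G \<subseteq> Rsp p" unfolding flow_polytope_def p_def by auto
  qed (auto simp: img)
  then show ?thesis using len p_def by simp
qed

lemma mset_blocks:
  assumes "\<forall>i\<in>set L. mset (f1 i) + mset (f2 i) + {#z#} = mset (g1 i) + mset (g2 i)"
  shows "mset (concat (map f1 L)) + mset (concat (map f2 L)) + mset (replicate (length L) z)
       = mset (concat (map g1 L)) + mset (concat (map g2 L))"
  using assms
proof (induction L)
  case (Cons i L)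
  then have e: "mset (f1 i) + mset (f2 i) + {#z#} = mset (g1 i) + mset (g2 i)" by simp
  have "mset (concat (map f1 (i # L))) + mset (concat (map f2 (i # L))) + mset (replicate (length (i # L)) z)
      = (mset (f1 i) + mset (f2 i) + {#z#}) + (mset (concat (map f1 L)) + mset (concat (map f2 L)) + mset (replicate (length L) z))"
    by (simp add: add_ac)
  also have "\<dots> = (mset (g1 i) + mset (g2 i)) + (mset (concat (map g1 L)) + mset (concat (map g2 L)))"
    using Cons e by simp
  finally show ?case by (simp add: add_ac)
qed simp


locale kctx =
  fixes n a b c :: nat
  assumes npos: "0 < n" and apos: "0 < a" and bpos: "0 < b"
begin

definition "Ablk = concat (map (\<lambda>i. replicate a (0, i)) [1..<n+1])"
definition "Bblk = concat (map (\<lambda>i. replicate (b+1) (i, n+1)) [1..<n+1])"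
definition "Cblk = concat (map (\<lambda>i. concat (map (\<lambda>j. replicate c (i, j)) [i+1..<n+1])) [1..<n+1])"
definition "AS S = concat (map (\<lambda>i. (if i \<in> S then (0, n+1) else (0, i)) # replicate (a-1) (0, i)) [1..<n+1])"
definition "BS S = concat (map (\<lambda>i. (if i \<in> S then (i, n+1) else (0, n+1)) # replicate b (i, n+1)) [1..<n+1])"
definition "K = Ablk @ Bblk @ Cblk"
definition "H S = AS S @ BS S @ Cblk"
definition "NA = n * a"
definition "NB = n * (b+1)"
definition "N = length K"

lemma K_eq: "K = kgraph a (b+1) c n"
  unfolding K_def kgraph_def Ablk_def Bblk_def Cblk_def by simp

lemma len_A: "length Ablk = NA" unfolding Ablk_def NA_def
  by (subst length_concat_uniform[where m = a]) auto
lemma len_B: "length Bblk = NB" unfolding Bblk_def NB_def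
  by (subst length_concat_uniform[where m = "b+1"]) auto
lemma len_AS: "length (AS S) = NA" unfolding AS_def NA_def
  using apos by (subst length_concat_uniform[where m = a]) auto
lemma len_BS: "length (BS S) = NB" unfolding BS_def NB_def
  by (subst length_concat_uniform[where m = "b+1"]) auto
lemma N_eq: "N = NA + NB + length Cblk" unfolding N_def K_def using len_A len_B by simp
lemma len_H: "length (H S) = N" unfolding H_def N_eq using len_AS len_BS by simp

lemma upt_nth1: "j < n \<Longrightarrow> [1..<n+1] ! j = Suc j"
  by (subst nth_upt) auto

lemma nth_Cons_rep: "r < Suc m \<Longrightarrow> (y # replicate m x) ! r = (if r = 0 then y else x)"
  by (cases r) auto

lemma K_A: "k < NA \<Longrightarrow> K ! k = (0, Suc (k div a))"
proof -
  assume k: "k < NA"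
  have "Ablk ! k = replicate a (0, [1..<n+1] ! (k div a)) ! (k mod a)"
    unfolding Ablk_def using k unfolding NA_def
    by (subst nth_concat_uniform[where m = a]) (auto simp: mult.commute npos Suc_leI)
  moreover have "k div a < n" using k unfolding NA_def by (simp add: less_mult_imp_div_less mult.commute)
  ultimately have "Ablk ! k = (0, Suc (k div a))" using apos by (simp only: upt_nth1) simp
  then show ?thesis unfolding K_def using k by (simp add: nth_append len_A)
qed

lemma K_B: "NA \<le> k \<Longrightarrow> k < NA + NB \<Longrightarrow> K ! k = (Suc ((k - NA) div (b+1)), n+1)"
proof -
  assume k: "NA \<le> k" "k < NA + NB"
  have "Bblk ! (k - NA) = replicate (b+1) ([1..<n+1] ! ((k - NA) div (b+1)), n+1) ! ((k - NA) mod (b+1))"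
    unfolding Bblk_def using k unfolding NB_def
    by (subst nth_concat_uniform[where m = "b+1"]) (auto simp: mult.commute npos Suc_leI)
  moreover have "(k - NA) div (b+1) < n" using k unfolding NB_def
    by (simp add: less_mult_imp_div_less mult.commute less_diff_conv2)
  ultimately have "Bblk ! (k - NA) = (Suc ((k - NA) div (b+1)), n+1)"
    by (simp only: upt_nth1) (simp add: nth_replicate del: replicate_Suc)
  moreover have "k - NA < NB" using k by linarith
  ultimately show ?thesis unfolding K_def using k by (simp add: nth_append len_A len_B)
qed

lemma H_A: "k < NA \<Longrightarrow> H S ! k = (if k mod a = 0 \<and> Suc (k div a) \<in> S then (0, n+1) else (0, Suc (k div a)))"
proof -
  assume k: "k < NA"
  have "AS S ! k = ((if [1..<n+1] ! (k div a) \<in> S then (0, n+1) else (0, [1..<n+1] ! (k div a)))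
      # replicate (a-1) (0, [1..<n+1] ! (k div a))) ! (k mod a)"
    unfolding AS_def using k apos unfolding NA_def
    by (subst nth_concat_uniform[where m = a]) (auto simp: mult.commute npos Suc_leI)
  moreover have "k div a < n" using k unfolding NA_def by (simp add: less_mult_imp_div_less mult.commute)
  moreover have "k mod a < a" using apos by simp
  ultimately have "AS S ! k = (if k mod a = 0 \<and> Suc (k div a) \<in> S then (0, n+1) else (0, Suc (k div a)))"
    by (simp only: upt_nth1) (cases "k mod a"; simp)
  then show ?thesis unfolding H_def using k by (simp add: nth_append len_AS)
qed

lemma H_B: "NA \<le> k \<Longrightarrow> k < NA + NB \<Longrightarrow>
  H S ! k = (if (k - NA) mod (b+1) = 0 \<and> Suc ((k - NA) div (b+1)) \<notin> S then (0, n+1) else (Suc ((k - NA) div (b+1)), n+1))"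
proof -
  assume k: "NA \<le> k" "k < NA + NB"
  have "BS S ! (k - NA) = ((if [1..<n+1] ! ((k - NA) div (b+1)) \<in> S then ([1..<n+1] ! ((k - NA) div (b+1)), n+1) else (0, n+1))
      # replicate b ([1..<n+1] ! ((k - NA) div (b+1)), n+1)) ! ((k - NA) mod (b+1))"
    unfolding BS_def using k unfolding NB_def
    by (subst nth_concat_uniform[where m = "b+1"]) (auto simp: mult.commute npos Suc_leI)
  moreover have "(k - NA) div (b+1) < n" using k unfolding NB_def
    by (simp add: less_mult_imp_div_less mult.commute less_diff_conv2)
  moreover have "(k - NA) mod (b+1) < b+1" by simp
  ultimately have "BS S ! (k - NA) = (if (k - NA) mod (b+1) = 0 \<and> Suc ((k - NA) div (b+1)) \<notin> S then (0, n+1) else (Suc ((k - NA) div (b+1)), n+1))"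
    by (simp only: upt_nth1) (simp add: nth_Cons_rep)
  moreover have "k - NA < NB" using k by linarith
  ultimately show ?thesis unfolding H_def using k by (simp add: nth_append len_AS len_BS)
qed

lemma H_C: "NA + NB \<le> k \<Longrightarrow> H S ! k = K ! k"
proof -
  assume k: "NA + NB \<le> k"
  have kk: "\<not> k - NA < NB" using k by linarith
  have "H S ! k = (BS S @ Cblk) ! (k - NA)" unfolding H_def using k by (simp add: nth_append len_AS)
  also have "\<dots> = Cblk ! (k - NA - NB)" using kk by (simp add: nth_append len_BS)
  also have "\<dots> = (Bblk @ Cblk) ! (k - NA)" using k kk by (simp add: nth_append len_B)
  also have "\<dots> = K ! k" unfolding K_def using k by (simp add: nth_append len_A)
  finally show ?thesis .
qed

definition "e1 j = j * a"
definition "e2 j = NA + j * (b+1)"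
definition "ind S k = ((k < NA \<and> k mod a = 0 \<and> Suc (k div a) \<notin> S) \<or>
   (NA \<le> k \<and> k < NA + NB \<and> (k - NA) mod (b+1) = 0 \<and> Suc ((k - NA) div (b+1)) \<in> S))"
definition "mfun k = (if k < NA then e2 (k div a) else if k < NA + NB then e1 ((k - NA) div (b+1)) else k)"
definition "sg S k = (if ind S k then 1 else (0::real))"
definition "Tm S = (\<lambda>x k. if k < N then x k + (- sg S k) * x (mfun k) else 0)"
definition "Um S = (\<lambda>x k. if k < N then x k + sg S k * x (mfun k) else 0)"

lemma NANB_N: "NA + NB \<le> N" unfolding N_eq by simp

lemma e1_lt: "j < n \<Longrightarrow> e1 j < NA"
  unfolding e1_def NA_def using apos by (simp add: mult.commute)
lemma e2_ge: "NA \<le> e2 j" unfolding e2_def by simp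
lemma e2_lt: "j < n \<Longrightarrow> e2 j + 1 < NA + NB"
proof -
  assume j: "j < n"
  have "j * (b+1) + 1 < (j+1) * (b+1)" using bpos by simp
  also have "\<dots> \<le> n * (b+1)" using j by (intro mult_right_mono) auto
  finally show ?thesis unfolding e2_def NB_def by simp
qed
lemma e1_div: "e1 j div a = j" "e1 j mod a = 0" unfolding e1_def using apos by auto
lemma e2_div: "(e2 j - NA) div (b+1) = j" "(e2 j - NA) mod (b+1) = 0"
proof -
  have e: "e2 j - NA = j * (b+1)" unfolding e2_def by simp
  show "(e2 j - NA) div (b+1) = j" unfolding e by (rule div_mult_self_is_m) simp
  show "(e2 j - NA) mod (b+1) = 0" unfolding e by (rule mod_mult_self2_is_0)
qed
lemma e3_div: "(e2 j + 1 - NA) div (b+1) = j" "(e2 j + 1 - NA) mod (b+1) \<noteq> 0"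
proof -
  have "(e2 j + 1 - NA) = 1 + j * (b+1)" unfolding e2_def by simp
  then show "(e2 j + 1 - NA) div (b+1) = j"
    by (simp only:) (subst div_mult_self1, simp, use bpos in simp)
  show "(e2 j + 1 - NA) mod (b+1) \<noteq> 0" unfolding \<open>e2 j + 1 - NA = 1 + j * (b+1)\<close>
    by (subst mod_mult_self1) (use bpos in simp)
qed

lemma K_e1: "j < n \<Longrightarrow> K ! e1 j = (0, Suc j)" using K_A[OF e1_lt] e1_div by simp
lemma K_e2: "j < n \<Longrightarrow> K ! e2 j = (Suc j, n+1)" using K_B[OF e2_ge, of j] e2_lt[of j] e2_div by simp
lemma K_e3: "j < n \<Longrightarrow> K ! (e2 j + 1) = (Suc j, n+1)"
  using K_B[of "e2 j + 1"] e2_ge[of j] e2_lt[of j] e3_div by simp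
lemma H_e1: "j < n \<Longrightarrow> H S ! e1 j = (if Suc j \<in> S then (0, n+1) else (0, Suc j))"
  using H_A[OF e1_lt] e1_div by simp
lemma H_e2: "j < n \<Longrightarrow> H S ! e2 j = (if Suc j \<notin> S then (0, n+1) else (Suc j, n+1))"
  using H_B[OF e2_ge, of j] e2_lt[of j] e2_div by simp
lemma ind_e1: "j < n \<Longrightarrow> ind S (e1 j) \<longleftrightarrow> Suc j \<notin> S"
  unfolding ind_def using e1_lt[of j] e1_div by auto
lemma ind_e2: "j < n \<Longrightarrow> ind S (e2 j) \<longleftrightarrow> Suc j \<in> S"
  unfolding ind_def using e2_ge[of j] e2_lt[of j] e2_div by auto
lemma mfun_e1: "j < n \<Longrightarrow> mfun (e1 j) = e2 j"
  unfolding mfun_def using e1_lt[of j] e1_div by auto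
lemma mfun_e2: "j < n \<Longrightarrow> mfun (e2 j) = e1 j"
  unfolding mfun_def using e2_ge[of j] e2_lt[of j] e2_div by auto

lemma A_decomp: "k < NA \<Longrightarrow> k div a < n \<and> (k mod a = 0 \<longrightarrow> k = e1 (k div a))"
proof -
  assume k: "k < NA"
  have "k div a < n" using k unfolding NA_def by (simp add: less_mult_imp_div_less)
  moreover have "k mod a = 0 \<longrightarrow> k = e1 (k div a)"
    unfolding e1_def using div_mult_mod_eq[of k a] by (intro impI) linarith
  ultimately show ?thesis by blast
qed
lemma B_decomp: "NA \<le> k \<Longrightarrow> k < NA + NB \<Longrightarrow> (k - NA) div (b+1) < n \<and> ((k - NA) mod (b+1) = 0 \<longrightarrow> k = e2 ((k - NA) div (b+1)))"
proof -
  assume k: "NA \<le> k" "k < NA + NB"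
  then have "k - NA < n * (b+1)" unfolding NB_def by linarith
  then have "(k - NA) div (b+1) < n" by (simp add: less_mult_imp_div_less)
  moreover have "(k - NA) mod (b+1) = 0 \<longrightarrow> k = e2 ((k - NA) div (b+1))"
    unfolding e2_def using k(1) div_mult_mod_eq[of "k - NA" "b+1"] by (intro impI) linarith
  ultimately show ?thesis by blast
qed

lemma mfun_lt: "k < N \<Longrightarrow> mfun k < N"
proof -
  assume k: "k < N"
  show ?thesis
  proof (cases "k < NA")
    case True
    then have "k div a < n" using A_decomp by blast
    moreover have "mfun k = e2 (k div a)" unfolding mfun_def using True by simp
    ultimately show ?thesis using e2_lt[of "k div a"] NANB_N by linarith
  next
    case False
    show ?thesis
    proof (cases "k < NA + NB")
      case True
      then have "(k - NA) div (b+1) < n" using B_decomp False by auto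
      moreover have "mfun k = e1 ((k - NA) div (b+1))" unfolding mfun_def using True False by simp
      ultimately show ?thesis using e1_lt[of "(k - NA) div (b+1)"] NANB_N by linarith
    qed (simp add: mfun_def k False)
  qed
qed

lemma ind_E: "ind S k \<Longrightarrow> \<exists>j<n. k = e1 j \<or> k = e2 j"
proof -
  assume "ind S k"
  then consider "k < NA" "k mod a = 0" | "NA \<le> k" "k < NA + NB" "(k - NA) mod (b+1) = 0"
    unfolding ind_def by (elim disjE conjE) auto
  then show ?thesis
  proof cases
    case 1 then show ?thesis using A_decomp[of k] by (intro exI[of _ "k div a"]) auto
  next
    case 2 then show ?thesis using B_decomp[of k] by (intro exI[of _ "(k - NA) div (b+1)"]) auto
  qed
qed

lemma notE_A: "k < NA \<Longrightarrow> (\<forall>j<n. k \<noteq> e1 j) \<Longrightarrow> k mod a \<noteq> 0"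
  using A_decomp by blast
lemma notE_B: "NA \<le> k \<Longrightarrow> k < NA + NB \<Longrightarrow> (\<forall>j<n. k \<noteq> e2 j) \<Longrightarrow> (k - NA) mod (b+1) \<noteq> 0"
  using B_decomp by blast

lemma H_eq: "(\<forall>j<n. k \<noteq> e1 j \<and> k \<noteq> e2 j) \<Longrightarrow> H S ! k = K ! k"
proof -
  assume ne: "\<forall>j<n. k \<noteq> e1 j \<and> k \<noteq> e2 j"
  consider "k < NA" | "NA \<le> k \<and> k < NA + NB" | "NA + NB \<le> k" by linarith
  then show ?thesis
  proof cases
    case 1 then show ?thesis using H_A[OF 1] K_A[OF 1] notE_A[OF 1] ne by simp
  next
    case 2 then show ?thesis using H_B[of k] K_B[of k] notE_B[of k] ne by simp
  next
    case 3 then show ?thesis using H_C by simp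
  qed
qed

lemma ind_notE: "(\<forall>j<n. k \<noteq> e1 j \<and> k \<noteq> e2 j) \<Longrightarrow> \<not> ind S k"
  using ind_E by blast

lemma ind_mfun: "ind S k \<Longrightarrow> \<not> ind S (mfun k)"
proof -
  assume i: "ind S k"
  then obtain j where j: "j < n" "k = e1 j \<or> k = e2 j" using ind_E by blast
  from j(2) show ?thesis
  proof
    assume "k = e1 j" then show ?thesis using i j(1) by (simp add: ind_e1 ind_e2 mfun_e1)
  next
    assume "k = e2 j" then show ?thesis using i j(1) by (simp add: ind_e1 ind_e2 mfun_e2)
  qed
qed

lemma e12_ne: "j < n \<Longrightarrow> j' < n \<Longrightarrow> e1 j \<noteq> e2 j'"
  using e1_lt[of j] e2_ge[of j'] by linarith
lemma e1_inj: "inj e1" unfolding e1_def inj_def using apos by auto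
lemma e2_inj: "inj e2"
proof (rule injI)
  fix x y assume "e2 x = e2 y"
  then have "x * (b+1) = y * (b+1)" unfolding e2_def by simp
  then show "x = y" using mult_right_cancel[of "b+1" x y] by simp
qed

definition "Fk = flow_polytope (n+1) K"
definition "FH S = flow_polytope (n+1) (H S)"
definition "PS S = {x \<in> Fk. \<forall>j<n. (Suc j \<in> S \<longrightarrow> x (e1 j) \<le> x (e2 j)) \<and> (Suc j \<notin> S \<longrightarrow> x (e2 j) \<le> x (e1 j))}"

lemma e1_N: "j < n \<Longrightarrow> e1 j < N" using e1_lt[of j] NANB_N by linarith
lemma e2_N: "j < n \<Longrightarrow> e2 j < N" using e2_lt[of j] NANB_N by linarith
lemma e3_N: "j < n \<Longrightarrow> e2 j + 1 < N" using e2_lt[of j] NANB_N by linarith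

lemma Tm_aff: "affine_map N N (Tm S)" unfolding Tm_def by (rule affine_map_lin[OF mfun_lt])
lemma Um_aff: "affine_map N N (Um S)" unfolding Um_def by (rule affine_map_lin[OF mfun_lt])

lemma sg_mfun: "sg S k \<noteq> 0 \<Longrightarrow> sg S (mfun k) = 0"
  unfolding sg_def using ind_mfun by (auto split: if_splits)

lemma UT: "x \<in> Rsp N \<Longrightarrow> Um S (Tm S x) = x"
proof
  fix k assume x: "x \<in> Rsp N"
  show "Um S (Tm S x) k = x k"
  proof (cases "k < N")
    case True
    then have m: "mfun k < N" by (rule mfun_lt)
    show ?thesis using True m sg_mfun[of S k] unfolding Um_def Tm_def
      by (cases "sg S k = 0") (simp_all add: algebra_simps)
  next
    case False then show ?thesis using x unfolding Um_def Rsp_def by simp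
  qed
qed

lemma TU: "x \<in> Rsp N \<Longrightarrow> Tm S (Um S x) = x"
proof
  fix k assume x: "x \<in> Rsp N"
  show "Tm S (Um S x) k = x k"
  proof (cases "k < N")
    case True
    then have m: "mfun k < N" by (rule mfun_lt)
    show ?thesis using True m sg_mfun[of S k] unfolding Um_def Tm_def
      by (cases "sg S k = 0") (simp_all add: algebra_simps)
  next
    case False then show ?thesis using x unfolding Tm_def Rsp_def by simp
  qed
qed

lemma sg_Z: "sg S k \<in> \<int>" unfolding sg_def by simp

lemma Tm_Z: "x \<in> Zpts \<Longrightarrow> Tm S x \<in> Zpts"
  unfolding Zpts_def Tm_def using sg_Z by (auto intro!: Ints_add Ints_mult Ints_minus)
lemma Um_Z: "x \<in> Zpts \<Longrightarrow> Um S x \<in> Zpts"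
  unfolding Zpts_def Um_def using sg_Z by (auto intro!: Ints_add Ints_mult)

lemma Tm_e1: "j < n \<Longrightarrow> Tm S x (e1 j) = x (e1 j) - (if Suc j \<notin> S then x (e2 j) else 0)"
  unfolding Tm_def sg_def using e1_N[of j] by (simp add: ind_e1 mfun_e1)
lemma Tm_e2: "j < n \<Longrightarrow> Tm S x (e2 j) = x (e2 j) - (if Suc j \<in> S then x (e1 j) else 0)"
  unfolding Tm_def sg_def using e2_N[of j] by (simp add: ind_e2 mfun_e2)
lemma Um_e1: "j < n \<Longrightarrow> Um S x (e1 j) = x (e1 j) + (if Suc j \<notin> S then x (e2 j) else 0)"
  unfolding Um_def sg_def using e1_N[of j] by (simp add: ind_e1 mfun_e1)
lemma Um_e2: "j < n \<Longrightarrow> Um S x (e2 j) = x (e2 j) + (if Suc j \<in> S then x (e1 j) else 0)"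
  unfolding Um_def sg_def using e2_N[of j] by (simp add: ind_e2 mfun_e2)

lemma chi_path: "chi (0, t) v = chi (0, i) v + chi (i, t) v"
  unfolding chi_def by simp

lemma netflow_Tm: "netflow (H S) (Tm S x) v = netflow K x v"
proof -
  define d where "d k = Tm S x k * chi (H S ! k) v - x k * chi (K ! k) v" for k
  define E where "E = e1 ` {..<n} \<union> e2 ` {..<n}"
  have EN: "E \<subseteq> {..<N}" unfolding E_def using e1_N e2_N by auto
  have d0: "d k = 0" if "k \<in> {..<N} - E" for k
  proof -
    have ne: "\<forall>j<n. k \<noteq> e1 j \<and> k \<noteq> e2 j" using that unfolding E_def by auto
    have "\<not> ind S k" using ind_notE[OF ne] .
    then have "Tm S x k = x k" using that unfolding Tm_def sg_def by simp
    then show ?thesis unfolding d_def using H_eq[OF ne] by simp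
  qed
  have "sum d {..<N} = sum d E"
    by (rule sum.mono_neutral_right[OF _ EN]) (use d0 in auto)
  also have "\<dots> = sum d (e1 ` {..<n}) + sum d (e2 ` {..<n})"
    unfolding E_def by (rule sum.union_disjoint) (use e12_ne in auto)
  also have "\<dots> = (\<Sum>j<n. d (e1 j)) + (\<Sum>j<n. d (e2 j))"
    using sum.reindex[OF inj_on_subset[OF e1_inj], of "{..<n}" d]
      sum.reindex[OF inj_on_subset[OF e2_inj], of "{..<n}" d] by simp
  also have "\<dots> = (\<Sum>j<n. d (e1 j) + d (e2 j))" by (simp add: sum.distrib)
  also have "\<dots> = 0"
  proof (rule sum.neutral, rule ballI)
    fix j assume "j \<in> {..<n}"
    then have j: "j < n" by simp
    show "d (e1 j) + d (e2 j) = 0"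
      unfolding d_def using j
      by (cases "Suc j \<in> S")
         (simp_all add: Tm_e1 Tm_e2 H_e1 H_e2 K_e1 K_e2 chi_path[of "Suc n" v "Suc j"] algebra_simps)
  qed
  finally have "sum d {..<N} = 0" .
  then show ?thesis unfolding netflow_chi len_H d_def sum_subtractf N_def[symmetric] by simp
qed

lemma Fk_mem: "x \<in> Fk \<longleftrightarrow> x \<in> Rsp N \<and> (\<forall>e<N. 0 \<le> x e) \<and>
   (\<forall>v\<le>n+1. netflow K x v = (if v = 0 then 1 else if v = n+1 then -1 else 0))"
  unfolding Fk_def flow_polytope_def N_def by simp
lemma FH_mem: "x \<in> FH S \<longleftrightarrow> x \<in> Rsp N \<and> (\<forall>e<N. 0 \<le> x e) \<and>
   (\<forall>v\<le>n+1. netflow (H S) x v = (if v = 0 then 1 else if v = n+1 then -1 else 0))"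
  unfolding FH_def flow_polytope_def len_H by simp

lemma sg_nn: "0 \<le> sg S k" unfolding sg_def by simp

lemma FH_img: "FH S = Tm S ` PS S"
proof
  show "FH S \<subseteq> Tm S ` PS S"
  proof
    fix y assume y: "y \<in> FH S"
    then have yR: "y \<in> Rsp N" and yn: "\<forall>e<N. 0 \<le> y e"
      and yf: "\<forall>v\<le>n+1. netflow (H S) y v = (if v = 0 then 1 else if v = n+1 then -1 else 0)"
      using FH_mem by auto
    define x where "x = Um S y"
    have xR: "x \<in> Rsp N" unfolding x_def by (rule affine_map_Rsp[OF Um_aff])
    have Tx: "Tm S x = y" unfolding x_def by (rule TU[OF yR])
    have xn: "\<forall>e<N. 0 \<le> x e"
    proof (intro allI impI)
      fix e assume e: "e < N"
      then have "mfun e < N" by (rule mfun_lt)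
      then show "0 \<le> x e" unfolding x_def Um_def using e yn sg_nn[of S e] by simp
    qed
    have xf: "\<forall>v\<le>n+1. netflow K x v = (if v = 0 then 1 else if v = n+1 then -1 else 0)"
      using yf netflow_Tm[of S x] Tx by simp
    have xc: "\<forall>j<n. (Suc j \<in> S \<longrightarrow> x (e1 j) \<le> x (e2 j)) \<and> (Suc j \<notin> S \<longrightarrow> x (e2 j) \<le> x (e1 j))"
    proof (intro allI impI)
      fix j assume j: "j < n"
      have "0 \<le> y (e1 j)" "0 \<le> y (e2 j)" using yn e1_N[OF j] e2_N[OF j] by auto
      then show "(Suc j \<in> S \<longrightarrow> x (e1 j) \<le> x (e2 j)) \<and> (Suc j \<notin> S \<longrightarrow> x (e2 j) \<le> x (e1 j))"
        unfolding x_def using j by (simp add: Um_e1 Um_e2)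
    qed
    have "x \<in> PS S" unfolding PS_def Fk_mem using xR xn xf xc by blast
    then show "y \<in> Tm S ` PS S" using Tx by blast
  qed
next
  show "Tm S ` PS S \<subseteq> FH S"
  proof
    fix y assume "y \<in> Tm S ` PS S"
    then obtain x where x: "x \<in> PS S" and yx: "y = Tm S x" by blast
    then have xR: "x \<in> Rsp N" and xn: "\<forall>e<N. 0 \<le> x e"
      and xf: "\<forall>v\<le>n+1. netflow K x v = (if v = 0 then 1 else if v = n+1 then -1 else 0)"
      and xc: "\<forall>j<n. (Suc j \<in> S \<longrightarrow> x (e1 j) \<le> x (e2 j)) \<and> (Suc j \<notin> S \<longrightarrow> x (e2 j) \<le> x (e1 j))"
      unfolding PS_def Fk_mem by auto
    have yR: "y \<in> Rsp N" unfolding yx by (rule affine_map_Rsp[OF Tm_aff])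
    have yn: "\<forall>e<N. 0 \<le> y e"
    proof (intro allI impI)
      fix e assume e: "e < N"
      show "0 \<le> y e"
      proof (cases "ind S e")
        case False
        then show ?thesis unfolding yx Tm_def sg_def using e xn by simp
      next
        case True
        then obtain j where j: "j < n" "e = e1 j \<or> e = e2 j" using ind_E by blast
        from j(2) show ?thesis
        proof
          assume ej: "e = e1 j"
          then have "Suc j \<notin> S" using True ind_e1[OF j(1)] by simp
          then show ?thesis unfolding yx ej using j(1) xc by (simp add: Tm_e1)
        next
          assume ej: "e = e2 j"
          then have "Suc j \<in> S" using True ind_e2[OF j(1)] by simp
          then show ?thesis unfolding yx ej using j(1) xc by (simp add: Tm_e2)
        qed
      qed
    qed
    have yf: "\<forall>v\<le>n+1. netflow (H S) y v = (if v = 0 then 1 else if v = n+1 then -1 else 0)"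
      using xf netflow_Tm[of S x] yx by simp
    show "y \<in> FH S" unfolding FH_mem using yR yn yf by blast
  qed
qed

lemma PS_Rsp: "PS S \<subseteq> Rsp N" unfolding PS_def Fk_mem by auto

lemma equiv_PS_FH: "int_equiv N (PS S) N (FH S)"
  by (rule int_equiv_via[OF Tm_aff Um_aff UT TU Tm_Z Um_Z PS_Rsp FH_img])

lemma mset_rep_a: "replicate_mset a x = add_mset x (replicate_mset (a-1) x)"
  using apos by (cases a) auto

lemma mset_kS: "mset (kgraphS a b c n S) = mset (H S)"
proof -
  have blk: "mset (concat (map (\<lambda>i. replicate (if i \<in> S then a - 1 else a) (0, i)) [1..<n+1]))
     + mset (concat (map (\<lambda>i. replicate (if i \<in> S then b + 1 else b) (i, n+1)) [1..<n+1]))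
     + mset (replicate (length [1..<n+1]) (0, n+1))
     = mset (AS S) + mset (BS S)"
    unfolding AS_def BS_def
    by (rule mset_blocks) (auto simp: mset_rep_a)
  have ln: "length [1..<n+1] = n" by simp
  define A' where "A' = concat (map (\<lambda>i. replicate (if i \<in> S then a - 1 else a) (0::nat, i)) [1..<n+1])"
  define B' where "B' = concat (map (\<lambda>i. replicate (if i \<in> S then b + 1 else b) (i, n+1)) [1..<n+1])"
  have k: "kgraphS a b c n S = A' @ B' @ Cblk @ replicate n (0, n+1)"
    unfolding kgraphS_def A'_def B'_def Cblk_def by simp
  have blk': "mset A' + mset B' + mset (replicate n (0, n+1)) = mset (AS S) + mset (BS S)"
    using blk unfolding A'_def B'_def ln .
  have "mset (kgraphS a b c n S) = mset A' + (mset B' + (mset Cblk + mset (replicate n (0, n+1))))"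
    unfolding k by (simp only: mset_append)
  also have "\<dots> = (mset A' + mset B' + mset (replicate n (0, n+1))) + mset Cblk"
    by (simp only: add_ac)
  also have "\<dots> = mset (AS S) + mset (BS S) + mset Cblk" unfolding blk' ..
  also have "\<dots> = mset (H S)" unfolding H_def by (simp only: mset_append add_ac)
  finally show ?thesis .
qed

lemma equiv_FH_kS: "int_equiv N (FH S) (length (kgraphS a b c n S)) (flow_polytope (n+1) (kgraphS a b c n S))"
proof -
  obtain f where f: "bij_betw f {..<length (kgraphS a b c n S)} {..<length (H S)}"
    and ff: "\<forall>i<length (kgraphS a b c n S). kgraphS a b c n S ! i = H S ! (f i)"
    using permutation_Ex_bij[OF mset_kS[of S]] by blast
  show ?thesis using flow_perm[OF f ff, of "n+1"] unfolding FH_def len_H .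
qed

lemma union_PS: "(\<Union>S\<in>Pow {1..n}. PS S) = Fk"
proof
  show "(\<Union>S\<in>Pow {1..n}. PS S) \<subseteq> Fk" unfolding PS_def by auto
  show "Fk \<subseteq> (\<Union>S\<in>Pow {1..n}. PS S)"
  proof
    fix x assume x: "x \<in> Fk"
    define S where "S = {i \<in> {1..n}. x (e1 (i - 1)) \<le> x (e2 (i - 1))}"
    have "\<forall>j<n. (Suc j \<in> S \<longrightarrow> x (e1 j) \<le> x (e2 j)) \<and> (Suc j \<notin> S \<longrightarrow> x (e2 j) \<le> x (e1 j))"
      unfolding S_def by auto
    then have "x \<in> PS S" unfolding PS_def using x by blast
    moreover have "S \<in> Pow {1..n}" unfolding S_def by auto
    ultimately show "x \<in> (\<Union>S\<in>Pow {1..n}. PS S)" by blast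
  qed
qed

lemma Fk_Rsp: "Fk \<subseteq> Rsp N" using Fk_mem by auto

lemma equiv_Fk: "int_equiv N Fk N Fk"
proof -
  define I where "I = (\<lambda>(x::nat \<Rightarrow> real) k. if k < N then x k + 0 * x (id k) else 0)"
  have aI: "affine_map N N I" unfolding I_def by (rule affine_map_lin) simp
  have II: "I x = x" if "x \<in> Rsp N" for x
    using that unfolding I_def Rsp_def by (auto intro!: ext)
  have "I ` Fk = Fk" using II Fk_Rsp by (auto simp: image_iff) (metis II subsetD)
  show ?thesis
    by (rule int_equiv_via[OF aI aI]) (auto simp: II Fk_Rsp \<open>I ` Fk = Fk\<close> dest: subsetD[OF Fk_Rsp])
qed

lemma path_Fk:
  assumes j: "j < n" and p: "p = e2 j \<or> p = e2 j + 1"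
  shows "(\<lambda>k. if k = e1 j \<or> k = p then 1 else 0) \<in> Fk"
proof -
  have pN: "p < N" using p e2_N[OF j] e3_N[OF j] by auto
  have ne: "e1 j \<noteq> p" using p e1_lt[OF j] e2_ge[of j] by auto
  have Kp: "K ! p = (Suc j, n+1)" using p K_e2[OF j] K_e3[OF j] by auto
  have "netflow K (\<lambda>k. if k = e1 j \<or> k = p then 1 else 0) v = chi (0, n+1) v" for v
    using netflow_two[OF ne, of K] e1_N[OF j] pN K_e1[OF j] Kp chi_path[of "n+1" v "Suc j"]
    unfolding N_def by simp
  then show ?thesis unfolding Fk_mem Rsp_def using pN e1_N[OF j] by (auto simp: chi_def)
qed

lemma no_interior:
  assumes j: "j < n" and R: "Suc j \<in> R" and x: "x \<in> PS R" and le: "x (e2 j) \<le> x (e1 j)"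
  shows "x \<notin> interior_in N Fk (PS R)"
proof
  assume "x \<in> interior_in N Fk (PS R)"
  then obtain e where e: "e > 0" and int: "\<forall>y\<in>aff Fk. distq N x y < e \<longrightarrow> y \<in> PS R"
    unfolding interior_in_def by blast
  define t where "t = e / 2"
  have t: "t > 0" unfolding t_def using e by simp
  define p1 where "p1 = (\<lambda>k. if k = e1 j \<or> k = e2 j + 1 then 1 else (0::real))"
  define p2 where "p2 = (\<lambda>k. if k = e1 j \<or> k = e2 j then 1 else (0::real))"
  have p1F: "p1 \<in> Fk" unfolding p1_def using path_Fk[OF j] by blast
  have p2F: "p2 \<in> Fk" unfolding p2_def using path_Fk[OF j] by blast
  have xF: "x \<in> Fk" using x unfolding PS_def by blast
  define y where "y = (\<lambda>k. x k + t * p1 k - t * p2 k)"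
  define X where "X = {x, p1, p2}"
  define u where "u z = (if z = x then 1 else 0) + (if z = p1 then t else 0) - (if z = p2 then t else 0)" for z
  have fX: "finite X" unfolding X_def by simp
  have su: "sum u X = 1"
    unfolding u_def sum_subtractf sum.distrib using fX unfolding X_def by (simp add: sum.delta)
  have yc: "y = (\<lambda>i. \<Sum>z\<in>X. u z * z i)"
  proof
    fix i
    have "(\<Sum>z\<in>X. u z * z i) = (\<Sum>z\<in>X. (if z = x then x i else 0) + (if z = p1 then t * p1 i else 0) - (if z = p2 then t * p2 i else 0))"
      unfolding u_def by (rule sum.cong) (auto simp: algebra_simps)
    also have "\<dots> = x i + t * p1 i - t * p2 i"
      unfolding sum_subtractf sum.distrib using fX unfolding X_def by (simp add: sum.delta)
    finally show "y i = (\<Sum>z\<in>X. u z * z i)" unfolding y_def by simp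
  qed
  have yA: "y \<in> aff Fk" unfolding aff_def
    using fX su yc xF p1F p2F unfolding X_def by blast
  have d: "(x k - y k)^2 = (if k = e2 j then t^2 else 0) + (if k = e2 j + 1 then t^2 else 0)" for k
    unfolding y_def p1_def p2_def using e1_lt[OF j] e2_ge[of j] by (auto simp: power2_eq_square)
  have "(\<Sum>k<N. (x k - y k)^2) = 2 * t^2"
    unfolding d sum.distrib using e2_N[OF j] e3_N[OF j] by simp
  then have "distq N x y = sqrt (2 * t^2)" unfolding distq_def by simp
  also have "\<dots> < sqrt ((2 * t)^2)" using t by (intro real_sqrt_less_mono) (simp add: power2_eq_square)
  also have "\<dots> = e" unfolding t_def using e by simp
  finally have "y \<in> PS R" using int yA by blast
  then have "y (e1 j) \<le> y (e2 j)" using R j unfolding PS_def by blast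
  moreover have "y (e1 j) = x (e1 j)" unfolding y_def p1_def p2_def by simp
  moreover have "y (e2 j) = x (e2 j) - t" unfolding y_def p1_def p2_def
    using e1_lt[OF j] e2_ge[of j] by simp
  ultimately show False using le t by simp
qed

lemma interior_disj:
  assumes S: "S \<subseteq> {1..n}" and T: "T \<subseteq> {1..n}" and ST: "S \<noteq> T"
  shows "interior_in N Fk (PS S) \<inter> interior_in N Fk (PS T) = {}"
proof (rule ccontr)
  assume "interior_in N Fk (PS S) \<inter> interior_in N Fk (PS T) \<noteq> {}"
  then obtain x where xS: "x \<in> interior_in N Fk (PS S)" and xT: "x \<in> interior_in N Fk (PS T)" by blast
  have xS': "x \<in> PS S" and xT': "x \<in> PS T" using xS xT unfolding interior_in_def by auto
  obtain i where i: "i \<in> {1..n}" "(i \<in> S \<and> i \<notin> T) \<or> (i \<in> T \<and> i \<notin> S)"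
    using S T ST by blast
  define j where "j = i - 1"
  have j: "j < n" "Suc j = i" using i(1) unfolding j_def by auto
  from i(2) show False
  proof
    assume "i \<in> S \<and> i \<notin> T"
    then have "x (e2 j) \<le> x (e1 j)" using xT' j unfolding PS_def by auto
    then show False using no_interior[OF j(1) _ xS'] xS j \<open>i \<in> S \<and> i \<notin> T\<close> by auto
  next
    assume "i \<in> T \<and> i \<notin> S"
    then have "x (e2 j) \<le> x (e1 j)" using xS' j unfolding PS_def by auto
    then show False using no_interior[OF j(1) _ xT'] xT j \<open>i \<in> T \<and> i \<notin> S\<close> by auto
  qed
qed

end

theorem lemma5p3:
  fixes n a b c :: nat
  assumes "0 < n" and "0 < a" and "0 < b"
  shows "\<exists>q (P :: nat set \<Rightarrow> (nat \<Rightarrow> real) set).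
     (\<forall>S. S \<subseteq> {1..n} \<longrightarrow>
        int_equiv q (P S) (length (kgraphS a b c n S)) (flow_polytope (n+1) (kgraphS a b c n S))) \<and>
     (\<forall>S T. S \<subseteq> {1..n} \<longrightarrow> T \<subseteq> {1..n} \<longrightarrow> S \<noteq> T \<longrightarrow>
        interior_in q (\<Union>S'\<in>Pow {1..n}. P S') (P S) \<inter>
        interior_in q (\<Union>S'\<in>Pow {1..n}. P S') (P T) = {}) \<and>
     int_equiv (length (kgraph a (b+1) c n)) (flow_polytope (n+1) (kgraph a (b+1) c n))
               q (\<Union>S\<in>Pow {1..n}. P S)"
proof -
  interpret kctx n a b c using assms by unfold_locales
  have c1: "\<forall>S. S \<subseteq> {1..n} \<longrightarrow>
        int_equiv N (PS S) (length (kgraphS a b c n S)) (flow_polytope (n+1) (kgraphS a b c n S))"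
    using int_equiv_trans[OF equiv_PS_FH equiv_FH_kS] by blast
  have c2: "\<forall>S T. S \<subseteq> {1..n} \<longrightarrow> T \<subseteq> {1..n} \<longrightarrow> S \<noteq> T \<longrightarrow>
        interior_in N (\<Union>S'\<in>Pow {1..n}. PS S') (PS S) \<inter>
        interior_in N (\<Union>S'\<in>Pow {1..n}. PS S') (PS T) = {}"
    unfolding union_PS using interior_disj by blast
  have c3: "int_equiv (length (kgraph a (b+1) c n)) (flow_polytope (n+1) (kgraph a (b+1) c n))
               N (\<Union>S\<in>Pow {1..n}. PS S)"
    unfolding union_PS K_eq[symmetric] N_def[symmetric] Fk_def[symmetric] by (rule equiv_Fk)
  show ?thesis using c1 c2 c3 by blast
qed

end
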